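(* Let $\mathbf{S}$ be any one of the four systems $\mathbf{G3N}$, $\mathbf{G3NeF}$, $\mathbf{G3CoPC}$, $\mathbf{G3MPC}$. The contraction rule "from $\Gamma,\alpha,\alpha\Rightarrow\varphi$ infer $\Gamma,\alpha\Rightarrow\varphi$" is height-preserving admissible in $\mathbf{S}$: for all finite multisets $\Gamma$ and formulas $\alpha,\varphi$, if $\Gamma,\alpha,\alpha\Rightarrow\varphi$ has a derivation in $\mathbf{S}$ of height at most $n$, then $\Gamma,\alpha\Rightarrow\varphi$ has a derivation in $\mathbf{S}$ of height at most $n$.
   Context: Formulas are generated from a countable set of propositional variables $p,q,\dots$ and the constant $\top$ by the grammar $\varphi::= p\mid\top\mid\varphi\wedge\varphi\mid\varphi\vee\varphi\mid\varphi\to\varphi\mid\neg\varphi$ (there is no constant $\bot$). $\varphi\leftrightarrow\psi$ abbreviates $(\varphi\to\psi)\wedge(\psi\to\varphi)$. A sequent is an expression $\Gamma\Rightarrow\varphi$ where $\Gamma$ is a finite multiset of formulas and $\varphi$ is a formula (the goal); $\Gamma,\Delta$ denotes multiset union and $\Gamma,\alpha$ denotes $\Gamma$ with one more occurrence of $\alpha$. Rules ($p$ a propositional variable): (ax) $\Gamma,p\Rightarrow p$ (no premises); ($\top$) $\Gamma\Rightarrow\top$ (no premises); ($\to$r) from $\Gamma,\alpha\Rightarrow\beta$ infer $\Gamma\Rightarrow\alpha\to\beta$; ($\to$l) from $\Gamma,\alpha\to\beta\Rightarrow\alpha$ and $\Gamma,\beta\Rightarrow\varphi$ infer $\Gamma,\alpha\to\beta\Rightarrow\varphi$;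 ($\wedge$r) from $\Gamma\Rightarrow\alpha$ and $\Gamma\Rightarrow\beta$ infer $\Gamma\Rightarrow\alpha\wedge\beta$; ($\wedge$l) from $\Gamma,\alpha,\beta\Rightarrow\varphi$ infer $\Gamma,\alpha\wedge\beta\Rightarrow\varphi$; ($\vee$r$_1$), ($\vee$r$_2$) from $\Gamma\Rightarrow\alpha$ (resp. $\Gamma\Rightarrow\beta$) infer $\Gamma\Rightarrow\alpha\vee\beta$; ($\vee$l) from $\Gamma,\alpha\Rightarrow\varphi$ and $\Gamma,\beta\Rightarrow\varphi$ infer $\Gamma,\alpha\vee\beta\Rightarrow\varphi$; (n) from $\Gamma,\neg\alpha,\beta\Rightarrow\alpha$ and $\Gamma,\neg\alpha,\alpha\Rightarrow\beta$ infer $\Gamma,\neg\alpha\Rightarrow\neg\beta$; (nef) from $\Gamma,\neg\alpha\Rightarrow\alpha$ infer $\Gamma,\neg\alpha\Rightarrow\neg\beta$; (copc) from $\Gamma,\neg\alpha,\beta\Rightarrow\alpha$ infer $\Gamma,\neg\alpha\Rightarrow\neg\beta$; (an) from $\Gamma,\alpha\Rightarrow\neg\alpha$ infer $\Gamma\Rightarrow\neg\alpha$. The rules (ax) through ($\vee$l) are the positive rules. The four systems are: $\mathbf{G3N}$ = positive rules + (n); $\mathbf{G3NeF}$ = positive rules + (n) + (nef); $\mathbf{G3CoPC}$ = positive rules + (copc); $\mathbf{G3MPC}$ = positive rules + (copc) + (an). None of them contains weakening, contraction or cut as a rule. A derivation is a finite tree of rule instances with leaves instances of (ax) or ($\top$);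 its height is the number of inference steps on a longest branch. A sequent is derivable if it has a derivation; a formula $\varphi$ is a theorem if $\Rightarrow\varphi$ (empty antecedent) is derivable. *)

theory Defs
  imports Main "HOL-Library.Multiset"
begin

datatype fm = Var nat | Top | Conj fm fm | Disj fm fm | Imp fm fm | Neg fm

datatype sys = G3N | G3NeF | G3CoPC | G3MPC

definition has_n :: "sys \<Rightarrow> bool" where
  "has_n S \<longleftrightarrow> S = G3N \<or> S = G3NeF"
definition has_nef :: "sys \<Rightarrow> bool" where
  "has_nef S \<longleftrightarrow> S = G3NeF"
definition has_copc :: "sys \<Rightarrow> bool" where
  "has_copc S \<longleftrightarrow> S = G3CoPC \<or> S = G3MPC"
definition has_an :: "sys \<Rightarrow> bool" where
  "has_an S \<longleftrightarrow> S = G3MPC"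

inductive deriv :: "sys \<Rightarrow> fm multiset \<Rightarrow> fm \<Rightarrow> nat \<Rightarrow> bool" where
  ax: "deriv S (add_mset (Var p) G) (Var p) 0"
| top: "deriv S G Top 0"
| impR: "deriv S (add_mset a G) b h \<Longrightarrow> deriv S G (Imp a b) (Suc h)"
| impL: "deriv S (add_mset (Imp a b) G) a h1 \<Longrightarrow> deriv S (add_mset b G) c h2 \<Longrightarrow>
          deriv S (add_mset (Imp a b) G) c (Suc (max h1 h2))"
| conjR: "deriv S G a h1 \<Longrightarrow> deriv S G b h2 \<Longrightarrow> deriv S G (Conj a b) (Suc (max h1 h2))"
| conjL: "deriv S (add_mset a (add_mset b G)) c h \<Longrightarrow> deriv S (add_mset (Conj a b) G) c (Suc h)"
| disjR1: "deriv S G a h \<Longrightarrow> deriv S G (Disj a b) (Suc h)"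
| disjR2: "deriv S G b h \<Longrightarrow> deriv S G (Disj a b) (Suc h)"
| disjL: "deriv S (add_mset a G) c h1 \<Longrightarrow> deriv S (add_mset b G) c h2 \<Longrightarrow>
          deriv S (add_mset (Disj a b) G) c (Suc (max h1 h2))"
| n: "has_n S \<Longrightarrow> deriv S (add_mset b (add_mset (Neg a) G)) a h1 \<Longrightarrow>
        deriv S (add_mset a (add_mset (Neg a) G)) b h2 \<Longrightarrow>
        deriv S (add_mset (Neg a) G) (Neg b) (Suc (max h1 h2))"
| nef: "has_nef S \<Longrightarrow> deriv S (add_mset (Neg a) G) a h \<Longrightarrow>
        deriv S (add_mset (Neg a) G) (Neg b) (Suc h)"
| copc: "has_copc S \<Longrightarrow> deriv S (add_mset b (add_mset (Neg a) G)) a h \<Longrightarrow>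
        deriv S (add_mset (Neg a) G) (Neg b) (Suc h)"
| an: "has_an S \<Longrightarrow> deriv S (add_mset a G) (Neg a) h \<Longrightarrow> deriv S G (Neg a) (Suc h)"

definition deriv_le :: "sys \<Rightarrow> fm multiset \<Rightarrow> fm \<Rightarrow> nat \<Rightarrow> bool" where
  "deriv_le S G phi n \<longleftrightarrow> (\<exists>h\<le>n. deriv S G phi h)"

end

theory Submission imports Defs begin

lemma ms_split: "add_mset x A = add_mset y B \<Longrightarrow> x \<noteq> y \<Longrightarrow> \<exists>C. A = add_mset y C \<and> B = add_mset x C"
  by (metis add_eq_conv_ex)

lemma dle_of: "deriv S G p h \<Longrightarrow> deriv_le S G p h" by (auto simp: deriv_le_def)

lemma dle_ax: "G = add_mset (Var p) G' \<Longrightarrow> deriv_le S G (Var p) h"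
  using deriv.ax by (auto simp: deriv_le_def)
lemma dle_top: "deriv_le S G Top h"
  using deriv.top by (auto simp: deriv_le_def)
lemma dle_impR: "deriv_le S G1 b h \<Longrightarrow> G1 = add_mset a G \<Longrightarrow> deriv_le S G (Imp a b) (Suc h)"
  unfolding deriv_le_def by (auto intro: deriv.impR)
lemma dle_impL: "deriv_le S G1 a h1 \<Longrightarrow> deriv_le S G2 c h2 \<Longrightarrow> G1 = add_mset (Imp a b) G \<Longrightarrow>
   G2 = add_mset b G \<Longrightarrow> G0 = add_mset (Imp a b) G \<Longrightarrow> h = Suc (max h1 h2) \<Longrightarrow> deriv_le S G0 c h"
  unfolding deriv_le_def
  apply (elim exE conjE)
  subgoal for h1' h2' by (intro exI[of _ "Suc (max h1' h2')"]) (auto intro!: deriv.impL)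
  done
lemma dle_conjR: "deriv_le S G a h1 \<Longrightarrow> deriv_le S G b h2 \<Longrightarrow> h = Suc (max h1 h2) \<Longrightarrow> deriv_le S G (Conj a b) h"
  unfolding deriv_le_def
  apply (elim exE conjE)
  subgoal for h1' h2' by (intro exI[of _ "Suc (max h1' h2')"]) (auto intro!: deriv.conjR)
  done
lemma dle_conjL: "deriv_le S G1 c h \<Longrightarrow> G1 = add_mset a (add_mset b G) \<Longrightarrow> G0 = add_mset (Conj a b) G \<Longrightarrow> deriv_le S G0 c (Suc h)"
  unfolding deriv_le_def by (fastforce intro!: deriv.conjL)
lemma dle_disjR1: "deriv_le S G a h \<Longrightarrow> deriv_le S G (Disj a b) (Suc h)"
  unfolding deriv_le_def by (fastforce intro!: deriv.disjR1)
lemma dle_disjR2: "deriv_le S G b h \<Longrightarrow> deriv_le S G (Disj a b) (Suc h)"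
  unfolding deriv_le_def by (fastforce intro!: deriv.disjR2)
lemma dle_disjL: "deriv_le S G1 c h1 \<Longrightarrow> deriv_le S G2 c h2 \<Longrightarrow> G1 = add_mset a G \<Longrightarrow>
   G2 = add_mset b G \<Longrightarrow> G0 = add_mset (Disj a b) G \<Longrightarrow> h = Suc (max h1 h2) \<Longrightarrow> deriv_le S G0 c h"
  unfolding deriv_le_def
  apply (elim exE conjE)
  subgoal for h1' h2' by (intro exI[of _ "Suc (max h1' h2')"]) (auto intro!: deriv.disjL)
  done
lemma dle_n: "has_n S \<Longrightarrow> deriv_le S G1 a h1 \<Longrightarrow> deriv_le S G2 b h2 \<Longrightarrow> G1 = add_mset b (add_mset (Neg a) G) \<Longrightarrow>
   G2 = add_mset a (add_mset (Neg a) G) \<Longrightarrow> G0 = add_mset (Neg a) G \<Longrightarrow> h = Suc (max h1 h2) \<Longrightarrow> deriv_le S G0 (Neg b) h"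
  unfolding deriv_le_def
  apply (elim exE conjE)
  subgoal for h1' h2' by (intro exI[of _ "Suc (max h1' h2')"]) (auto intro!: deriv.n)
  done
lemma dle_nef: "has_nef S \<Longrightarrow> deriv_le S G1 a h \<Longrightarrow> G1 = add_mset (Neg a) G \<Longrightarrow> G0 = add_mset (Neg a) G \<Longrightarrow> deriv_le S G0 (Neg b) (Suc h)"
  unfolding deriv_le_def by (fastforce intro!: deriv.nef)
lemma dle_copc: "has_copc S \<Longrightarrow> deriv_le S G1 a h \<Longrightarrow> G1 = add_mset b (add_mset (Neg a) G) \<Longrightarrow> G0 = add_mset (Neg a) G \<Longrightarrow> deriv_le S G0 (Neg b) (Suc h)"
  unfolding deriv_le_def by (fastforce intro!: deriv.copc)
lemma dle_an: "has_an S \<Longrightarrow> deriv_le S G1 (Neg a) h \<Longrightarrow> G1 = add_mset a G \<Longrightarrow> deriv_le S G (Neg a) (Suc h)"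
  unfolding deriv_le_def by (fastforce intro!: deriv.an)

lemma dle_mono: "deriv_le S G p h \<Longrightarrow> h \<le> h' \<Longrightarrow> deriv_le S G p h'"
  unfolding deriv_le_def by (meson order_trans)

lemmas ac = add_mset_commute

lemma inv_gen:
  assumes "deriv S G' c h" "G' = add_mset P G"
  and nv: "\<And>p. P \<noteq> Var p" and nn: "\<And>x. P \<noteq> Neg x"
  and HC: "\<And>S x y G0 c h. P = Conj x y \<Longrightarrow> deriv S (add_mset x (add_mset y G0)) c h \<Longrightarrow> deriv_le S (D + G0) c (Suc h)"
  and HD: "\<And>S x y G0 c h1 h2. P = Disj x y \<Longrightarrow> deriv S (add_mset x G0) c h1 \<Longrightarrow> deriv S (add_mset y G0) c h2 \<Longrightarrow> deriv_le S (D + G0) c (Suc (max h1 h2))"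
  and HI: "\<And>S x y G0 c h1 h2. P = Imp x y \<Longrightarrow> deriv S (add_mset (Imp x y) G0) x h1 \<Longrightarrow> deriv S (add_mset y G0) c h2 \<Longrightarrow> deriv_le S (D + G0) c (Suc (max h1 h2))"
  shows "deriv_le S (D + G) c h"
  using assms(1,2)
proof (induction arbitrary: G rule: deriv.induct)
  case (ax S p G0)
  obtain C where C: "G0 = add_mset P C" "G = add_mset (Var p) C" using ms_split[OF ax.prems] nv by metis
  show ?case by (rule dle_ax[where G'="D + C"]) (simp add: C ac)
next
  case (top S G)
  show ?case by (rule dle_top)
next
  case (impR S x G0 y h)
  have "deriv_le S (D + (add_mset x G)) y h"
    using impR.IH[of "add_mset x G"] impR.prems by (simp add: ac)
  then show ?case by (rule dle_impR) (simp add: ac)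
next
  case (impL S x y G0 h1 c h2)
  show ?case
  proof (cases "Imp x y = P")
    case True
    then have "G0 = G" using impL.prems by auto
    then show ?thesis using HI[OF True[symmetric] impL.hyps] by simp
  next
    case False
    obtain C where C: "G0 = add_mset P C" "G = add_mset (Imp x y) C" using ms_split[OF impL.prems False] by auto
    have 1: "deriv_le S (D + (add_mset (Imp x y) C)) x h1"
      using impL.IH(1)[of "add_mset (Imp x y) C"] C by (simp add: ac)
    have 2: "deriv_le S (D + (add_mset y C)) c h2"
      using impL.IH(2)[of "add_mset y C"] C by (simp add: ac)
    show ?thesis by (rule dle_impL[OF 1 2, where b=y and G="D + C"]) (simp_all add: C ac)
  qed
next
  case (conjR S G0 x h1 y h2)
  show ?case by (rule dle_conjR[OF conjR.IH(1)[OF conjR.prems] conjR.IH(2)[OF conjR.prems]]) simp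
next
  case (conjL S x y G0 c h)
  show ?case
  proof (cases "Conj x y = P")
    case True
    then have "G0 = G" using conjL.prems by auto
    then show ?thesis using HC[OF True[symmetric] conjL.hyps] by simp
  next
    case False
    obtain C where C: "G0 = add_mset P C" "G = add_mset (Conj x y) C" using ms_split[OF conjL.prems False] by auto
    have 1: "deriv_le S (D + (add_mset x (add_mset y C))) c h"
      using conjL.IH[of "add_mset x (add_mset y C)"] C by (simp add: ac)
    show ?thesis unfolding conjL(2) by (rule dle_conjL[OF 1, where a=x and b=y and G="D + C"]) (simp_all add: C ac)
  qed
next
  case (disjR1 S G0 x h y)
  then show ?case by (simp add: dle_disjR1)
next
  case (disjR2 S G0 y h x)
  then show ?case by (simp add: dle_disjR2)
next
  case (disjL S x G0 c h1 y h2)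
  show ?case
  proof (cases "Disj x y = P")
    case True
    then have "G0 = G" using disjL.prems by auto
    then show ?thesis using HD[OF True[symmetric] disjL.hyps] by simp
  next
    case False
    obtain C where C: "G0 = add_mset P C" "G = add_mset (Disj x y) C" using ms_split[OF disjL.prems False] by auto
    have 1: "deriv_le S (D + (add_mset x C)) c h1"
      using disjL.IH(1)[of "add_mset x C"] C by (simp add: ac)
    have 2: "deriv_le S (D + (add_mset y C)) c h2"
      using disjL.IH(2)[of "add_mset y C"] C by (simp add: ac)
    show ?thesis by (rule dle_disjL[OF 1 2, where a=x and b=y and G="D + C"]) (simp_all add: C ac)
  qed
next
  case (n S y x G0 h1 h2)
  obtain C where C: "G0 = add_mset P C" "G = add_mset (Neg x) C" using ms_split[OF n.prems] nn by metis
  have 1: "deriv_le S (D + (add_mset y (add_mset (Neg x) C))) x h1"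
    using n.IH(1)[of "add_mset y (add_mset (Neg x) C)"] C by (simp add: ac)
  have 2: "deriv_le S (D + (add_mset x (add_mset (Neg x) C))) y h2"
    using n.IH(2)[of "add_mset x (add_mset (Neg x) C)"] C by (simp add: ac)
  show ?case by (rule dle_n[OF n.hyps(1) 1 2, where G="D + C"]) (simp_all add: C ac)
next
  case (nef S x G0 h y)
  obtain C where C: "G0 = add_mset P C" "G = add_mset (Neg x) C" using ms_split[OF nef.prems] nn by metis
  have 1: "deriv_le S (D + (add_mset (Neg x) C)) x h"
    using nef.IH[of "add_mset (Neg x) C"] C by (simp add: ac)
  show ?case by (rule dle_nef[OF nef.hyps(1) 1, where G="D + C"]) (simp_all add: C ac)
next
  case (copc S y x G0 h)
  obtain C where C: "G0 = add_mset P C" "G = add_mset (Neg x) C" using ms_split[OF copc.prems] nn by metis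
  have 1: "deriv_le S (D + (add_mset y (add_mset (Neg x) C))) x h"
    using copc.IH[of "add_mset y (add_mset (Neg x) C)"] C by (simp add: ac)
  show ?case by (rule dle_copc[OF copc.hyps(1) 1, where b=y and G="D + C"]) (simp_all add: C ac)
next
  case (an S x G0 h)
  have "deriv_le S (D + (add_mset x G)) (Neg x) h"
    using an.IH[of "add_mset x G"] an.prems by (simp add: ac)
  then show ?case by (rule dle_an[OF an.hyps(1)]) (simp add: ac)
qed

lemma inv_conj: assumes d: "deriv S (add_mset (Conj a b) G) c h" shows "deriv_le S (add_mset a (add_mset b G)) c h"
proof -
  have "deriv_le S ({#a, b#} + G) c h"
    by (rule inv_gen[OF d refl]) (auto intro: dle_mono[OF dle_of])
  then show ?thesis by simp
qed

lemma inv_disj1: assumes d: "deriv S (add_mset (Disj a b) G) c h" shows "deriv_le S (add_mset a G) c h"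
proof -
  have "deriv_le S ({#a#} + G) c h"
    by (rule inv_gen[OF d refl]) (auto intro: dle_mono[OF dle_of])
  then show ?thesis by simp
qed

lemma inv_disj2: assumes d: "deriv S (add_mset (Disj a b) G) c h" shows "deriv_le S (add_mset b G) c h"
proof -
  have "deriv_le S ({#b#} + G) c h"
    by (rule inv_gen[OF d refl]) (auto intro: dle_mono[OF dle_of])
  then show ?thesis by simp
qed

lemma inv_imp: assumes d: "deriv S (add_mset (Imp a b) G) c h" shows "deriv_le S (add_mset b G) c h"
proof -
  have "deriv_le S ({#b#} + G) c h"
    by (rule inv_gen[OF d refl]) (auto intro: dle_mono[OF dle_of])
  then show ?thesis by simp
qed

lemma ms_split2: "add_mset X G0 = add_mset a (add_mset a G) \<Longrightarrow> X \<noteq> a \<Longrightarrow> \<exists>C. G0 = add_mset a (add_mset a C) \<and> G = add_mset X C"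
proof -
  assume e: "add_mset X G0 = add_mset a (add_mset a G)" and ne: "X \<noteq> a"
  obtain C1 where c1: "G0 = add_mset a C1" "add_mset a G = add_mset X C1" using ms_split[OF e ne] by blast
  obtain C2 where c2: "G = add_mset X C2" "C1 = add_mset a C2" using ms_split[OF c1(2)] ne by metis
  show ?thesis using c1 c2 by blast
qed

lemma dle_ax': "Var p \<in># M \<Longrightarrow> deriv_le S M (Var p) h"
  by (rule dle_ax[where G'="M - {#Var p#}"]) simp

lemma contr: "deriv S G' phi h \<Longrightarrow> G' = add_mset a (add_mset a G) \<Longrightarrow> deriv_le S (add_mset a G) phi h"
proof (induction h arbitrary: S G' phi a G rule: less_induct)
  case (less h)
  have IH: "deriv_le S0 (add_mset a0 G0) phi0 h'"
    if lt: "h' < h" and dd: "deriv_le S0 (add_mset a0 (add_mset a0 G0)) phi0 h'" for h' S0 a0 G0 phi0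
  proof -
    obtain h'' where "h'' \<le> h'" "deriv S0 (add_mset a0 (add_mset a0 G0)) phi0 h''"
      using dd unfolding deriv_le_def by blast
    moreover have "h'' < h" using lt calculation(1) by simp
    ultimately show ?thesis using less.IH[of h'' S0 _ phi0 a0 G0] dle_mono by blast
  qed
  have E: "G' = add_mset a (add_mset a G)" by (rule less.prems(2))
  from less.prems(1) show ?case
  proof (cases rule: deriv.cases)
    case (ax p G0)
    have "Var p \<in># add_mset a G" using E ax(1) by (metis insert_iff set_mset_add_mset_insert union_single_eq_member)
    then show ?thesis using ax by (simp add: dle_ax')
  next
    case top
    then show ?thesis by (simp add: dle_top)
  next
    case (impR x y h0)
    have 1: "deriv_le S (add_mset a (add_mset x G)) y h0"
      by (rule less.IH[OF _ impR(3)]) (simp_all add: impR E ac)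
    show ?thesis using dle_impR[OF 1, of x] by (simp add: impR ac)
  next
    case (impL x y G0 h1 h2)
    have E': "add_mset (Imp x y) G0 = add_mset a (add_mset a G)" using E impL by simp
    show ?thesis
    proof (cases "Imp x y = a")
      case True
      then have G0: "G0 = add_mset a G" using E' by simp
      have 1: "deriv_le S (add_mset a G) x h1"
        by (rule less.IH[OF _ impL(3)]) (simp_all add: impL G0 True ac)
      have "deriv S (add_mset (Imp x y) (add_mset y G)) phi h2" using impL(4) G0 True by (simp add: ac)
      then have "deriv_le S (add_mset y (add_mset y G)) phi h2" by (rule inv_imp)
      then have 2: "deriv_le S (add_mset y G) phi h2" by (rule IH[rotated]) (simp add: impL)
      show ?thesis by (rule dle_impL[OF 1 2, where b=y and G=G]) (simp_all add: impL True)
    next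
      case False
      obtain C where C: "G0 = add_mset a (add_mset a C)" "G = add_mset (Imp x y) C" using ms_split2[OF E' False] by blast
      have 1: "deriv_le S (add_mset a (add_mset (Imp x y) C)) x h1"
        by (rule less.IH[OF _ impL(3)]) (simp_all add: impL C ac)
      have 2: "deriv_le S (add_mset a (add_mset y C)) phi h2"
        by (rule less.IH[OF _ impL(4)]) (simp_all add: impL C ac)
      show ?thesis by (rule dle_impL[OF 1 2, where b=y and G="add_mset a C"]) (simp_all add: impL C ac)
    qed
  next
    case (conjR x h1 y h2)
    have 1: "deriv_le S (add_mset a G) x h1"
      by (rule less.IH[OF _ conjR(3)]) (simp_all add: conjR E)
    have 2: "deriv_le S (add_mset a G) y h2"
      by (rule less.IH[OF _ conjR(4)]) (simp_all add: conjR E)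
    show ?thesis unfolding conjR(1,2) by (rule dle_conjR[OF 1 2]) simp
  next
    case (conjL x y G0 h0)
    have E': "add_mset (Conj x y) G0 = add_mset a (add_mset a G)" using E conjL by simp
    show ?thesis
    proof (cases "Conj x y = a")
      case True
      then have G0: "G0 = add_mset a G" using E' by simp
      have "deriv S (add_mset (Conj x y) (add_mset x (add_mset y G))) phi h0" using conjL(3) G0 True by (simp add: ac)
      then have "deriv_le S (add_mset x (add_mset y (add_mset x (add_mset y G)))) phi h0" by (rule inv_conj)
      then have "deriv_le S (add_mset x (add_mset x (add_mset y (add_mset y G)))) phi h0" by (simp add: ac)
      then have "deriv_le S (add_mset x (add_mset y (add_mset y G))) phi h0" by (rule IH[rotated]) (simp add: conjL)
      then have "deriv_le S (add_mset y (add_mset y (add_mset x G))) phi h0" by (simp add: ac)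
      then have "deriv_le S (add_mset y (add_mset x G)) phi h0" by (rule IH[rotated]) (simp add: conjL)
      then have 1: "deriv_le S (add_mset x (add_mset y G)) phi h0" by (simp add: ac)
      show ?thesis unfolding conjL(2) by (rule dle_conjL[OF 1, where a=x and b=y and G=G]) (simp_all add: conjL True)
    next
      case False
      obtain C where C: "G0 = add_mset a (add_mset a C)" "G = add_mset (Conj x y) C" using ms_split2[OF E' False] by blast
      have 1: "deriv_le S (add_mset a (add_mset x (add_mset y C))) phi h0"
        by (rule less.IH[OF _ conjL(3)]) (simp_all add: conjL C ac)
      show ?thesis unfolding conjL(2) by (rule dle_conjL[OF 1, where a=x and b=y and G="add_mset a C"]) (simp_all add: conjL C ac)
    qed
  next
    case (disjR1 x h0 y)
    have 1: "deriv_le S (add_mset a G) x h0"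
      by (rule less.IH[OF _ disjR1(3)]) (simp_all add: disjR1 E)
    show ?thesis using dle_disjR1[OF 1] by (simp add: disjR1)
  next
    case (disjR2 y h0 x)
    have 1: "deriv_le S (add_mset a G) y h0"
      by (rule less.IH[OF _ disjR2(3)]) (simp_all add: disjR2 E)
    show ?thesis using dle_disjR2[OF 1] by (simp add: disjR2)
  next
    case (disjL x G0 h1 y h2)
    have E': "add_mset (Disj x y) G0 = add_mset a (add_mset a G)" using E disjL by simp
    show ?thesis
    proof (cases "Disj x y = a")
      case True
      then have G0: "G0 = add_mset a G" using E' by simp
      have "deriv S (add_mset (Disj x y) (add_mset x G)) phi h1" using disjL(3) G0 True by (simp add: ac)
      then have "deriv_le S (add_mset x (add_mset x G)) phi h1" by (rule inv_disj1)
      then have 1: "deriv_le S (add_mset x G) phi h1" by (rule IH[rotated]) (simp add: disjL)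
      have "deriv S (add_mset (Disj x y) (add_mset y G)) phi h2" using disjL(4) G0 True by (simp add: ac)
      then have "deriv_le S (add_mset y (add_mset y G)) phi h2" by (rule inv_disj2)
      then have 2: "deriv_le S (add_mset y G) phi h2" by (rule IH[rotated]) (simp add: disjL)
      show ?thesis by (rule dle_disjL[OF 1 2, where G=G]) (simp_all add: disjL True[symmetric])
    next
      case False
      obtain C where C: "G0 = add_mset a (add_mset a C)" "G = add_mset (Disj x y) C" using ms_split2[OF E' False] by blast
      have 1: "deriv_le S (add_mset a (add_mset x C)) phi h1"
        by (rule less.IH[OF _ disjL(3)]) (simp_all add: disjL C ac)
      have 2: "deriv_le S (add_mset a (add_mset y C)) phi h2"
        by (rule less.IH[OF _ disjL(4)]) (simp_all add: disjL C ac)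
      show ?thesis by (rule dle_disjL[OF 1 2, where a=x and b=y and G="add_mset a C"]) (simp_all add: disjL C ac)
    qed
  next
    case (n y x G0 h1 h2)
    have E': "add_mset (Neg x) G0 = add_mset a (add_mset a G)" using E n by simp
    show ?thesis
    proof (cases "Neg x = a")
      case True
      then have G0: "G0 = add_mset a G" using E' by simp
      have 1: "deriv_le S (add_mset a (add_mset y G)) x h1"
        by (rule less.IH[OF _ n(5)]) (simp_all add: n G0 True ac)
      have 2: "deriv_le S (add_mset a (add_mset x G)) y h2"
        by (rule less.IH[OF _ n(6)]) (simp_all add: n G0 True ac)
      show ?thesis unfolding n(2) by (rule dle_n[OF n(4) 1 2, where G=G]) (simp_all add: n True ac)
    next
      case False
      obtain C where C: "G0 = add_mset a (add_mset a C)" "G = add_mset (Neg x) C" using ms_split2[OF E' False] by blast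
      have 1: "deriv_le S (add_mset a (add_mset y (add_mset (Neg x) C))) x h1"
        by (rule less.IH[OF _ n(5)]) (simp_all add: n C ac)
      have 2: "deriv_le S (add_mset a (add_mset x (add_mset (Neg x) C))) y h2"
        by (rule less.IH[OF _ n(6)]) (simp_all add: n C ac)
      show ?thesis unfolding n(2) by (rule dle_n[OF n(4) 1 2, where G="add_mset a C"]) (simp_all add: n C ac)
    qed
  next
    case (nef x G0 h0 y)
    have E': "add_mset (Neg x) G0 = add_mset a (add_mset a G)" using E nef by simp
    show ?thesis
    proof (cases "Neg x = a")
      case True
      then have G0: "G0 = add_mset a G" using E' by simp
      have 1: "deriv_le S (add_mset a G) x h0"
        by (rule less.IH[OF _ nef(5)]) (simp_all add: nef G0 True ac)
      show ?thesis unfolding nef(2,3) by (rule dle_nef[OF nef(4) 1, where G=G]) (simp_all add: nef True ac)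
    next
      case False
      obtain C where C: "G0 = add_mset a (add_mset a C)" "G = add_mset (Neg x) C" using ms_split2[OF E' False] by blast
      have 1: "deriv_le S (add_mset a (add_mset (Neg x) C)) x h0"
        by (rule less.IH[OF _ nef(5)]) (simp_all add: nef C ac)
      show ?thesis unfolding nef(2,3) by (rule dle_nef[OF nef(4) 1, where G="add_mset a C"]) (simp_all add: nef C ac)
    qed
  next
    case (copc y x G0 h0)
    have E': "add_mset (Neg x) G0 = add_mset a (add_mset a G)" using E copc by simp
    show ?thesis
    proof (cases "Neg x = a")
      case True
      then have G0: "G0 = add_mset a G" using E' by simp
      have 1: "deriv_le S (add_mset a (add_mset y G)) x h0"
        by (rule less.IH[OF _ copc(5)]) (simp_all add: copc G0 True ac)
      show ?thesis unfolding copc(2,3) by (rule dle_copc[OF copc(4) 1, where b=y and G=G]) (simp_all add: copc True ac)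
    next
      case False
      obtain C where C: "G0 = add_mset a (add_mset a C)" "G = add_mset (Neg x) C" using ms_split2[OF E' False] by blast
      have 1: "deriv_le S (add_mset a (add_mset y (add_mset (Neg x) C))) x h0"
        by (rule less.IH[OF _ copc(5)]) (simp_all add: copc C ac)
      show ?thesis unfolding copc(2,3) by (rule dle_copc[OF copc(4) 1, where b=y and G="add_mset a C"]) (simp_all add: copc C ac)
    qed
  next
    case (an x h0)
    have 1: "deriv_le S (add_mset a (add_mset x G)) (Neg x) h0"
      by (rule less.IH[OF _ an(4)]) (simp_all add: an E ac)
    show ?thesis unfolding an(1,2) by (rule dle_an[OF an(3) 1]) (simp_all add: ac)
  qed
qed

theorem proposition3p2:
  fixes S :: sys and G :: "fm multiset" and a phi :: fm and n :: nat
  assumes "deriv_le S (add_mset a (add_mset a G)) phi n"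
  shows "deriv_le S (add_mset a G) phi n"
proof -
  obtain h where "h \<le> n" "deriv S (add_mset a (add_mset a G)) phi h"
    using assms unfolding deriv_le_def by blast
  then show ?thesis using contr[OF _ refl] dle_mono by blast
qed

end
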